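(* Let $n\geq 4$ and let $\gamma: WT_n\to\mathrm{GL}_{n+1}(\mathbb{C})$ be a homogeneous $3$-local representation of the welded twin group $WT_n$. Then $\gamma$ is reducible.
   Context: The virtual twin group $VT_n$ ($n\geq 2$) has generators $s_1,\dots,s_{n-1},\rho_1,\dots,\rho_{n-1}$ and defining relations: $s_i^2=1$ ($1\le i\le n-1$); $s_is_j=s_js_i$ ($|i-j|\ge2$); $\rho_i\rho_{i+1}\rho_i=\rho_{i+1}\rho_i\rho_{i+1}$ ($1\le i\le n-2$); $\rho_i\rho_j=\rho_j\rho_i$ ($|i-j|\ge2$); $\rho_i^2=1$; $s_i\rho_j=\rho_js_i$ ($|i-j|\ge2$); $\rho_i\rho_{i+1}s_i=s_{i+1}\rho_i\rho_{i+1}$ ($1\le i\le n-2$). The welded twin group $WT_n$ is the quotient of $VT_n$ by the additional relations $\rho_is_{i+1}s_i=s_{i+1}s_i\rho_{i+1}$ ($1\le i\le n-2$). A representation $\gamma:WT_n\to\mathrm{GL}_{n+1}(\mathbb{C})$ is homogeneous $3$-local if there are fixed $M,N\in\mathrm{GL}_3(\mathbb{C})$ with $\gamma(s_i)=\mathrm{diag}(I_{i-1},M,I_{n-i-1})$ and $\gamma(\rho_i)=\mathrm{diag}(I_{i-1},N,I_{n-i-1})$ for all $i$ (block-diagonal, $I_r$ the $r\times r$ identity). Reducible means there is a subspace $0\neq U\neq\mathbb{C}^{n+1}$ invariant under all $\gamma(g)$. *)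

theory Defs
  imports "Jordan_Normal_Form.Matrix" "Jordan_Normal_Form.Determinant"
begin

text \<open>Block-diagonal embedding diag(I_{i-1}, A, I_{n-i-1}) of a 3x3 matrix A
  into (n+1)x(n+1) matrices; i ranges over 1..n-1, rows/columns are 0-indexed,
  so the block occupies indices i-1, i, i+1.\<close>
definition local_mat :: "nat \<Rightarrow> nat \<Rightarrow> complex mat \<Rightarrow> complex mat" where
  "local_mat n i A = mat (n+1) (n+1) (\<lambda>(a,b).
     if i - 1 \<le> a \<and> a < i + 2 \<and> i - 1 \<le> b \<and> b < i + 2
     then A $$ (a + 1 - i, b + 1 - i)
     else if a = b then 1 else 0)"

definition WT_relations :: "nat \<Rightarrow> (nat \<Rightarrow> complex mat) \<Rightarrow> (nat \<Rightarrow> complex mat) \<Rightarrow> bool" where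
  "WT_relations n S R \<longleftrightarrow>
     (\<forall>i\<in>{1..n-1}. S i * S i = 1\<^sub>m (n+1)) \<and>
     (\<forall>i\<in>{1..n-1}. \<forall>j\<in>{1..n-1}. (i + 2 \<le> j \<or> j + 2 \<le> i) \<longrightarrow> S i * S j = S j * S i) \<and>
     (\<forall>i\<in>{1..n-2}. R i * R (i+1) * R i = R (i+1) * R i * R (i+1)) \<and>
     (\<forall>i\<in>{1..n-1}. \<forall>j\<in>{1..n-1}. (i + 2 \<le> j \<or> j + 2 \<le> i) \<longrightarrow> R i * R j = R j * R i) \<and>
     (\<forall>i\<in>{1..n-1}. R i * R i = 1\<^sub>m (n+1)) \<and>
     (\<forall>i\<in>{1..n-1}. \<forall>j\<in>{1..n-1}. (i + 2 \<le> j \<or> j + 2 \<le> i) \<longrightarrow> S i * R j = R j * S i) \<and>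
     (\<forall>i\<in>{1..n-2}. R i * R (i+1) * S i = S (i+1) * R i * R (i+1)) \<and>
     (\<forall>i\<in>{1..n-2}. R i * S (i+1) * S i = S (i+1) * S i * R (i+1))"

definition hom_3local_rep_WT :: "nat \<Rightarrow> complex mat \<Rightarrow> complex mat \<Rightarrow> bool" where
  "hom_3local_rep_WT n M N \<longleftrightarrow>
     M \<in> carrier_mat 3 3 \<and> N \<in> carrier_mat 3 3 \<and> det M \<noteq> 0 \<and> det N \<noteq> 0 \<and>
     WT_relations n (\<lambda>i. local_mat n i M) (\<lambda>i. local_mat n i N)"

text \<open>The image gamma(WT_n): the set of all products of generator images.
  (All generators are involutions, so this monoid is the image group.)\<close>
inductive_set rep_image :: "nat \<Rightarrow> complex mat \<Rightarrow> complex mat \<Rightarrow> complex mat set"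
  for n M N where
  one: "1\<^sub>m (n+1) \<in> rep_image n M N"
| gen_s: "g \<in> rep_image n M N \<Longrightarrow> 1 \<le> i \<Longrightarrow> i \<le> n - 1 \<Longrightarrow> local_mat n i M * g \<in> rep_image n M N"
| gen_r: "g \<in> rep_image n M N \<Longrightarrow> 1 \<le> i \<Longrightarrow> i \<le> n - 1 \<Longrightarrow> local_mat n i N * g \<in> rep_image n M N"

definition is_subspace :: "nat \<Rightarrow> complex vec set \<Rightarrow> bool" where
  "is_subspace d U \<longleftrightarrow> U \<subseteq> carrier_vec d \<and> 0\<^sub>v d \<in> U \<and>
     (\<forall>u\<in>U. \<forall>v\<in>U. u + v \<in> U) \<and> (\<forall>c. \<forall>u\<in>U. c \<cdot>\<^sub>v u \<in> U)"

definition reducible_rep :: "nat \<Rightarrow> complex mat set \<Rightarrow> bool" where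
  "reducible_rep d G \<longleftrightarrow> (\<exists>U. is_subspace d U \<and> U \<noteq> {0\<^sub>v d} \<and> U \<noteq> carrier_vec d \<and>
     (\<forall>g\<in>G. \<forall>u\<in>U. g *\<^sub>v u \<in> U))"

end

theory Submission imports Defs begin

lemma lm_entry: "a < n+1 \<Longrightarrow> b < n+1 \<Longrightarrow> local_mat n i A $$ (a,b) =
  (if i - 1 \<le> a \<and> a < i + 2 \<and> i - 1 \<le> b \<and> b < i + 2
     then A $$ (a + 1 - i, b + 1 - i)
     else if a = b then 1 else 0)"
  unfolding local_mat_def by simp

lemma lm_dims[simp]: "local_mat n i A \<in> carrier_mat (n+1) (n+1)"
  unfolding local_mat_def by simp

lemma lm_dims2[simp]: "local_mat n i A \<in> carrier_mat (Suc n) (Suc n)"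
  "dim_row (local_mat n i A) = Suc n" "dim_col (local_mat n i A) = Suc n"
  unfolding local_mat_def by simp_all

lemma sum5: assumes "(n::nat) \<ge> 4" "\<forall>k\<ge>5. k < n+1 \<longrightarrow> f k = (0::complex)"
  shows "sum f {0..<n+1} = f 0 + f 1 + f 2 + f 3 + f 4"
proof -
  have "{0..<n+1} = {0..<5} \<union> {5..<n+1}" using assms by auto
  then have "sum f {0..<n+1} = sum f {0..<5} + sum f {5..<n+1}"
    by (simp add: sum.union_disjoint)
  also have "sum f {5..<n+1} = 0" using assms(2) by simp
  also have "sum f {0..<5} = f 0 + f 1 + f 2 + f 3 + f 4" by (simp add: numeral_eq_Suc)
  finally show ?thesis by simp
qed

lemma prod_entry13: assumes "n \<ge> 4" "a < 5" "b < 5"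
  shows "(local_mat n 1 X * local_mat n 3 Y) $$ (a,b) =
    local_mat n 1 X $$ (a,0) * local_mat n 3 Y $$ (0,b) +
    local_mat n 1 X $$ (a,1) * local_mat n 3 Y $$ (1,b) +
    local_mat n 1 X $$ (a,2) * local_mat n 3 Y $$ (2,b) +
    local_mat n 1 X $$ (a,3) * local_mat n 3 Y $$ (3,b) +
    local_mat n 1 X $$ (a,4) * local_mat n 3 Y $$ (4,b)" (is "_ = ?R")
proof -
  have "(local_mat n 1 X * local_mat n 3 Y) $$ (a,b) =
     sum (\<lambda>k. local_mat n 1 X $$ (a,k) * local_mat n 3 Y $$ (k,b)) {0..<n+1}"
    using assms by (simp add: index_mult_mat scalar_prod_def local_mat_def)
  also have "\<dots> = ?R" 
    apply (rule sum5[OF assms(1)])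
    using assms by (auto simp: local_mat_def)
  finally show ?thesis .
qed

lemma prod_entry31: assumes "n \<ge> 4" "a < 5" "b < 5"
  shows "(local_mat n 3 Y * local_mat n 1 X) $$ (a,b) =
    local_mat n 3 Y $$ (a,0) * local_mat n 1 X $$ (0,b) +
    local_mat n 3 Y $$ (a,1) * local_mat n 1 X $$ (1,b) +
    local_mat n 3 Y $$ (a,2) * local_mat n 1 X $$ (2,b) +
    local_mat n 3 Y $$ (a,3) * local_mat n 1 X $$ (3,b) +
    local_mat n 3 Y $$ (a,4) * local_mat n 1 X $$ (4,b)" (is "_ = ?R")
proof -
  have "(local_mat n 3 Y * local_mat n 1 X) $$ (a,b) =
     sum (\<lambda>k. local_mat n 3 Y $$ (a,k) * local_mat n 1 X $$ (k,b)) {0..<n+1}"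
    using assms by (simp add: index_mult_mat scalar_prod_def local_mat_def)
  also have "\<dots> = ?R" 
    apply (rule sum5[OF assms(1)])
    using assms by (auto simp: local_mat_def)
  finally show ?thesis .
qed

lemma comm13:
  assumes n: "n \<ge> 4" and c: "local_mat n 1 X * local_mat n 3 Y = local_mat n 3 Y * local_mat n 1 X"
  shows "X$$(0,2) * (Y$$(0,0) - 1) = 0" "X$$(1,2) * (Y$$(0,0) - 1) = 0"
    "Y$$(1,0) * (X$$(2,2) - 1) = 0" "Y$$(2,0) * (X$$(2,2) - 1) = 0"
    "Y$$(1,0) * X$$(2,0) = 0" "Y$$(1,0) * X$$(2,1) = 0"
    "Y$$(2,0) * X$$(2,0) = 0" "Y$$(2,0) * X$$(2,1) = 0"
proof -
  have e: "(local_mat n 1 X * local_mat n 3 Y) $$ (a,b) = (local_mat n 3 Y * local_mat n 1 X) $$ (a,b)" for a b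
    using c by simp
  have ent: "local_mat n i A $$ (a,b) =
  (if i - 1 \<le> a \<and> a < i + 2 \<and> i - 1 \<le> b \<and> b < i + 2
     then A $$ (a + 1 - i, b + 1 - i)
     else if a = b then 1 else 0)" if "a < 5" "b < 5" for i A a b
    using that n by (intro lm_entry) auto
  show "X$$(0,2) * (Y$$(0,0) - 1) = 0" using e[of 0 2] prod_entry13[OF n, of 0 2 X Y] prod_entry31[OF n, of 0 2 Y X] by (simp add: ent algebra_simps eval_nat_numeral)
  show "X$$(1,2) * (Y$$(0,0) - 1) = 0" using e[of 1 2] prod_entry13[OF n, of 1 2 X Y] prod_entry31[OF n, of 1 2 Y X] by (simp add: ent algebra_simps eval_nat_numeral)
  show "Y$$(1,0) * (X$$(2,2) - 1) = 0" using e[of 3 2] prod_entry13[OF n, of 3 2 X Y] prod_entry31[OF n, of 3 2 Y X] by (simp add: ent algebra_simps eval_nat_numeral)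
  show "Y$$(2,0) * (X$$(2,2) - 1) = 0" using e[of 4 2] prod_entry13[OF n, of 4 2 X Y] prod_entry31[OF n, of 4 2 Y X] by (simp add: ent algebra_simps eval_nat_numeral)
  show "Y$$(1,0) * X$$(2,0) = 0" using e[of 3 0] prod_entry13[OF n, of 3 0 X Y] prod_entry31[OF n, of 3 0 Y X] by (simp add: ent algebra_simps eval_nat_numeral)
  show "Y$$(1,0) * X$$(2,1) = 0" using e[of 3 1] prod_entry13[OF n, of 3 1 X Y] prod_entry31[OF n, of 3 1 Y X] by (simp add: ent algebra_simps eval_nat_numeral)
  show "Y$$(2,0) * X$$(2,0) = 0" using e[of 4 0] prod_entry13[OF n, of 4 0 X Y] prod_entry31[OF n, of 4 0 Y X] by (simp add: ent algebra_simps eval_nat_numeral)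
  show "Y$$(2,0) * X$$(2,1) = 0" using e[of 4 1] prod_entry13[OF n, of 4 1 X Y] prod_entry31[OF n, of 4 1 Y X] by (simp add: ent algebra_simps eval_nat_numeral)
qed


lemma rep_carrier: "g \<in> rep_image n M N \<Longrightarrow> g \<in> carrier_mat (n+1) (n+1)"
  by (induction rule: rep_image.induct) (auto intro!: mult_carrier_mat)

lemma inv_gen:
  assumes "U \<subseteq> carrier_vec (n+1)"
    and gm: "\<And>i u. 1 \<le> i \<Longrightarrow> i \<le> n - 1 \<Longrightarrow> u \<in> U \<Longrightarrow> local_mat n i M *\<^sub>v u \<in> U"
    and gn: "\<And>i u. 1 \<le> i \<Longrightarrow> i \<le> n - 1 \<Longrightarrow> u \<in> U \<Longrightarrow> local_mat n i N *\<^sub>v u \<in> U"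
  shows "g \<in> rep_image n M N \<Longrightarrow> \<forall>u\<in>U. g *\<^sub>v u \<in> U"
proof (induction rule: rep_image.induct)
  case one
  then show ?case using assms(1) by auto
next
  case (gen_s g i)
  show ?case
  proof
    fix u assume u: "u \<in> U"
    have gc: "g \<in> carrier_mat (n+1) (n+1)" using gen_s(1) by (rule rep_carrier)
    have "(local_mat n i M * g) *\<^sub>v u = local_mat n i M *\<^sub>v (g *\<^sub>v u)"
      using gc u assms(1) by (intro assoc_mult_mat_vec) auto
    then show "(local_mat n i M * g) *\<^sub>v u \<in> U" using gm gen_s u by simp
  qed
next
  case (gen_r g i)
  show ?case
  proof
    fix u assume u: "u \<in> U"
    have gc: "g \<in> carrier_mat (n+1) (n+1)" using gen_r(1) by (rule rep_carrier)
    have "(local_mat n i N * g) *\<^sub>v u = local_mat n i N *\<^sub>v (g *\<^sub>v u)"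
      using gc u assms(1) by (intro assoc_mult_mat_vec) auto
    then show "(local_mat n i N * g) *\<^sub>v u \<in> U" using gn gen_r u by simp
  qed
qed

lemma mv_entry: "v \<in> carrier_vec (n+1) \<Longrightarrow> a < n+1 \<Longrightarrow>
  (local_mat n i A *\<^sub>v v) $ a = (\<Sum>b<n+1. local_mat n i A $$ (a,b) * v $ b)"
  unfolding mult_mat_vec_def scalar_prod_def
  by (auto simp: local_mat_def atLeast0LessThan intro!: sum.cong)

definition UA :: "nat \<Rightarrow> complex vec set" where
  "UA n = {v \<in> carrier_vec (n+1). \<forall>j. 1 \<le> j \<longrightarrow> j < n+1 \<longrightarrow> v $ j = 0}"
definition UC :: "nat \<Rightarrow> complex vec set" where
  "UC n = {v \<in> carrier_vec (n+1). \<forall>j<n. v $ j = 0}"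
definition UD :: "nat \<Rightarrow> complex vec set" where
  "UD n = {v \<in> carrier_vec (n+1). v $ n = 0}"

lemma genA: assumes "A $$ (1,0) = 0" "A $$ (2,0) = 0" "1 \<le> i" "u \<in> UA n"
  shows "local_mat n i A *\<^sub>v u \<in> UA n"
proof -
  have u: "u \<in> carrier_vec (n+1)" and z: "\<And>j. 1 \<le> j \<Longrightarrow> j < n+1 \<Longrightarrow> u $ j = 0"
    using assms(4) unfolding UA_def by auto
  have "(local_mat n i A *\<^sub>v u) $ a = 0" if "1 \<le> a" "a < n+1" for a
  proof -
    have "(local_mat n i A *\<^sub>v u) $ a = (\<Sum>b<n+1. local_mat n i A $$ (a,b) * u $ b)"
      using u that by (intro mv_entry) auto
    also have "\<dots> = 0"
    proof (rule sum.neutral, intro ballI)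
      fix b assume b: "b \<in> {..<n+1}"
      show "local_mat n i A $$ (a,b) * u $ b = 0"
      proof (cases "b = 0")
        case True
        have L: "local_mat n i A $$ (a,0) = (if i - 1 \<le> a \<and> a < i + 2 \<and> i - 1 \<le> 0 \<and> 0 < i + 2
             then A $$ (a + 1 - i, 0 + 1 - i) else if a = 0 then 1 else 0)"
          by (rule lm_entry) (use that in auto)
        have "local_mat n i A $$ (a,0) = 0"
        proof (cases "i = 1 \<and> a < 3")
          case True
          then have "a = 1 \<or> a = 2" using that by auto
          then show ?thesis
          proof
            assume "a = 1" then show ?thesis using L True assms(1) by simp
          next
            assume "a = 2" then show ?thesis using L True assms(2) by simp
          qed
        next
          case False
          then have nc: "\<not> (i - 1 \<le> a \<and> a < i + 2 \<and> i - 1 \<le> 0 \<and> 0 < i + 2)" using assms(3) by auto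
          have "local_mat n i A $$ (a,0) = (if a = 0 then 1 else 0)" using L by (simp only: if_not_P[OF nc])
          then show ?thesis using that by simp
        qed
        then show ?thesis using True by simp
      next
        case False
        then show ?thesis using z b by auto
      qed
    qed
    finally show ?thesis .
  qed
  moreover have "local_mat n i A *\<^sub>v u \<in> carrier_vec (n+1)"
    using mult_mat_vec_carrier[OF lm_dims u] .
  ultimately show ?thesis unfolding UA_def by blast
qed

lemma genC: assumes "A $$ (0,2) = 0" "A $$ (1,2) = 0" "1 \<le> i" "i \<le> n - 1" "u \<in> UC n"
  shows "local_mat n i A *\<^sub>v u \<in> UC n"
proof -
  have u: "u \<in> carrier_vec (n+1)" and z: "\<And>j. j < n \<Longrightarrow> u $ j = 0"
    using assms(5) unfolding UC_def by auto
  have "(local_mat n i A *\<^sub>v u) $ a = 0" if "a < n" for a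
  proof -
    have "(local_mat n i A *\<^sub>v u) $ a = (\<Sum>b<n+1. local_mat n i A $$ (a,b) * u $ b)"
      using u that by (intro mv_entry) auto
    also have "\<dots> = 0"
    proof (rule sum.neutral, intro ballI)
      fix b assume b: "b \<in> {..<n+1}"
      show "local_mat n i A $$ (a,b) * u $ b = 0"
      proof (cases "b = n")
        case True
        have "local_mat n i A $$ (a,n) = 0"
        proof (cases "i = n - 1 \<and> n - 2 \<le> a")
          case True
          then have "a + 1 - i = 0 \<or> a + 1 - i = 1" "n + 1 - i = 2" using that assms(3,4) by auto
          then show ?thesis using that assms True by (subst lm_entry) auto
        next
          case False
          then show ?thesis using that assms by (subst lm_entry) auto
        qed
        then show ?thesis using True by simp
      next
        case False
        then show ?thesis using z b by auto
      qed
    qed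
    finally show ?thesis .
  qed
  moreover have "local_mat n i A *\<^sub>v u \<in> carrier_vec (n+1)"
    using mult_mat_vec_carrier[OF lm_dims u] .
  ultimately show ?thesis unfolding UC_def by blast
qed

lemma genD: assumes "A $$ (2,0) = 0" "A $$ (2,1) = 0" "1 \<le> i" "i \<le> n - 1" "u \<in> UD n"
  shows "local_mat n i A *\<^sub>v u \<in> UD n"
proof -
  have u: "u \<in> carrier_vec (n+1)" and z: "u $ n = 0"
    using assms(5) unfolding UD_def by auto
  have "(local_mat n i A *\<^sub>v u) $ n = (\<Sum>b<n+1. local_mat n i A $$ (n,b) * u $ b)"
    using u by (intro mv_entry) auto
  also have "\<dots> = 0"
  proof (rule sum.neutral, intro ballI)
    fix b assume b: "b \<in> {..<n+1}"
    show "local_mat n i A $$ (n,b) * u $ b = 0"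
    proof (cases "b = n")
      case False
      note bn = False
      have "local_mat n i A $$ (n,b) = 0"
      proof (cases "i = n - 1 \<and> n - 2 \<le> b")
        case True
        then have "b + 1 - i = 0 \<or> b + 1 - i = 1" "n + 1 - i = 2" using False b assms(3,4) by auto
        then show ?thesis using b assms True False by (subst lm_entry) auto
      next
        case False
        then have nb: "\<not> (i - 1 \<le> n \<and> n < i + 2 \<and> i - 1 \<le> b \<and> b < i + 2)"
          using assms(3,4) by linarith
        show ?thesis using b bn by (subst lm_entry) (use nb in auto)
      qed
      then show ?thesis by simp
    next
      case True
      then show ?thesis using z by auto
    qed
  qed
  finally have "(local_mat n i A *\<^sub>v u) $ n = 0" .
  moreover have "local_mat n i A *\<^sub>v u \<in> carrier_vec (n+1)"
    using mult_mat_vec_carrier[OF lm_dims u] .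
  ultimately show ?thesis unfolding UD_def by blast
qed


lemma subspace_A: "is_subspace (n+1) (UA n)" unfolding is_subspace_def UA_def by auto
lemma subspace_C: "is_subspace (n+1) (UC n)" unfolding is_subspace_def UC_def by auto
lemma subspace_D: "is_subspace (n+1) (UD n)" unfolding is_subspace_def UD_def by auto

lemma redA: assumes "n \<ge> 1" "M $$ (1,0) = 0" "M $$ (2,0) = 0" "N $$ (1,0) = 0" "N $$ (2,0) = 0"
  shows "reducible_rep (n+1) (rep_image n M N)"
  unfolding reducible_rep_def
proof (intro exI conjI)
  show "is_subspace (n+1) (UA n)" by (rule subspace_A)
  have "unit_vec (n+1) 0 \<in> UA n" unfolding UA_def by auto
  moreover have "unit_vec (n+1) 0 \<noteq> 0\<^sub>v (n+1)"
    by (metis add_gr_0 index_unit_vec(1) index_zero_vec(1) less_numeral_extra(1) zero_neq_one)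
  ultimately show "UA n \<noteq> {0\<^sub>v (n+1)}" by auto
  have "unit_vec (n+1) 1 \<notin> UA n" using assms(1) unfolding UA_def by auto
  then show "UA n \<noteq> carrier_vec (n+1)" by auto
  show "\<forall>g\<in>rep_image n M N. \<forall>u\<in>UA n. g *\<^sub>v u \<in> UA n"
  proof (rule ballI)
    fix g assume g: "g \<in> rep_image n M N"
    show "\<forall>u\<in>UA n. g *\<^sub>v u \<in> UA n"
    proof (rule inv_gen[OF _ _ _ g])
      show "UA n \<subseteq> carrier_vec (n+1)" unfolding UA_def by auto
      show "local_mat n i M *\<^sub>v u \<in> UA n" if "1 \<le> i" "i \<le> n - 1" "u \<in> UA n" for i u
        using genA[OF assms(2,3) that(1,3)] .
      show "local_mat n i N *\<^sub>v u \<in> UA n" if "1 \<le> i" "i \<le> n - 1" "u \<in> UA n" for i u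
        using genA[OF assms(4,5) that(1,3)] .
    qed
  qed
qed


lemma redC: assumes "n \<ge> 1" "M $$ (0,2) = 0" "M $$ (1,2) = 0" "N $$ (0,2) = 0" "N $$ (1,2) = 0"
  shows "reducible_rep (n+1) (rep_image n M N)"
  unfolding reducible_rep_def
proof (intro exI conjI)
  show "is_subspace (n+1) (UC n)" by (rule subspace_C)
  have "unit_vec (n+1) n \<in> UC n" unfolding UC_def by auto
  moreover have "unit_vec (n+1) n \<noteq> 0\<^sub>v (n+1)"
    by (metis index_unit_vec(1) index_zero_vec(1) less_add_one zero_neq_one)
  ultimately show "UC n \<noteq> {0\<^sub>v (n+1)}" by auto
  have "unit_vec (n+1) 0 \<notin> UC n" using assms(1) unfolding UC_def by auto
  then show "UC n \<noteq> carrier_vec (n+1)" by auto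
  show "\<forall>g\<in>rep_image n M N. \<forall>u\<in>UC n. g *\<^sub>v u \<in> UC n"
  proof (rule ballI)
    fix g assume g: "g \<in> rep_image n M N"
    show "\<forall>u\<in>UC n. g *\<^sub>v u \<in> UC n"
    proof (rule inv_gen[OF _ _ _ g])
      show "UC n \<subseteq> carrier_vec (n+1)" unfolding UC_def by auto
      show "local_mat n i M *\<^sub>v u \<in> UC n" if "1 \<le> i" "i \<le> n - 1" "u \<in> UC n" for i u
        using genC[OF assms(2,3) that] .
      show "local_mat n i N *\<^sub>v u \<in> UC n" if "1 \<le> i" "i \<le> n - 1" "u \<in> UC n" for i u
        using genC[OF assms(4,5) that] .
    qed
  qed
qed

lemma redD: assumes "n \<ge> 1" "M $$ (2,0) = 0" "M $$ (2,1) = 0" "N $$ (2,0) = 0" "N $$ (2,1) = 0"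
  shows "reducible_rep (n+1) (rep_image n M N)"
  unfolding reducible_rep_def
proof (intro exI conjI)
  show "is_subspace (n+1) (UD n)" by (rule subspace_D)
  have "unit_vec (n+1) 0 \<in> UD n" using assms(1) unfolding UD_def by auto
  moreover have "unit_vec (n+1) 0 \<noteq> 0\<^sub>v (n+1)"
    by (metis add_gr_0 index_unit_vec(1) index_zero_vec(1) less_numeral_extra(1) zero_neq_one)
  ultimately show "UD n \<noteq> {0\<^sub>v (n+1)}" by auto
  have "unit_vec (n+1) n \<notin> UD n" unfolding UD_def by auto
  then show "UD n \<noteq> carrier_vec (n+1)" by auto
  show "\<forall>g\<in>rep_image n M N. \<forall>u\<in>UD n. g *\<^sub>v u \<in> UD n"
  proof (rule ballI)
    fix g assume g: "g \<in> rep_image n M N"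
    show "\<forall>u\<in>UD n. g *\<^sub>v u \<in> UD n"
    proof (rule inv_gen[OF _ _ _ g])
      show "UD n \<subseteq> carrier_vec (n+1)" unfolding UD_def by auto
      show "local_mat n i M *\<^sub>v u \<in> UD n" if "1 \<le> i" "i \<le> n - 1" "u \<in> UD n" for i u
        using genD[OF assms(2,3) that] .
      show "local_mat n i N *\<^sub>v u \<in> UD n" if "1 \<le> i" "i \<le> n - 1" "u \<in> UD n" for i u
        using genD[OF assms(4,5) that] .
    qed
  qed
qed

theorem theorem4p4:
  fixes n :: nat and M N :: "complex mat"
  assumes "n \<ge> 4"
    and "hom_3local_rep_WT n M N"
  shows "reducible_rep (n+1) (rep_image n M N)"
proof -
  have W: "WT_relations n (\<lambda>i. local_mat n i M) (\<lambda>i. local_mat n i N)"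
    using assms(2) unfolding hom_3local_rep_WT_def by blast
  have i1: "(1::nat) \<in> {1..n-1}" and i3: "(3::nat) \<in> {1..n-1}" using assms(1) by auto
  have R2: "\<forall>i\<in>{1..n-1}. \<forall>j\<in>{1..n-1}. (i + 2 \<le> j \<or> j + 2 \<le> i) \<longrightarrow> local_mat n i M * local_mat n j M = local_mat n j M * local_mat n i M"
    and R4: "\<forall>i\<in>{1..n-1}. \<forall>j\<in>{1..n-1}. (i + 2 \<le> j \<or> j + 2 \<le> i) \<longrightarrow> local_mat n i N * local_mat n j N = local_mat n j N * local_mat n i N"
    and R6: "\<forall>i\<in>{1..n-1}. \<forall>j\<in>{1..n-1}. (i + 2 \<le> j \<or> j + 2 \<le> i) \<longrightarrow> local_mat n i M * local_mat n j N = local_mat n j N * local_mat n i M"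
    using W unfolding WT_relations_def by blast+
  have MM: "local_mat n 1 M * local_mat n 3 M = local_mat n 3 M * local_mat n 1 M"
    using R2[rule_format, OF i1 i3] by simp
  have NN: "local_mat n 1 N * local_mat n 3 N = local_mat n 3 N * local_mat n 1 N"
    using R4[rule_format, OF i1 i3] by simp
  have MN: "local_mat n 1 M * local_mat n 3 N = local_mat n 3 N * local_mat n 1 M"
    using R6[rule_format, OF i1 i3] by simp
  have NM: "local_mat n 1 N * local_mat n 3 M = local_mat n 3 M * local_mat n 1 N"
    using R6[rule_format, OF i3 i1] by simp
  note mm = comm13[OF assms(1) MM] and nn = comm13[OF assms(1) NN]
    and mn = comm13[OF assms(1) MN] and nm = comm13[OF assms(1) NM]
  have n1: "n \<ge> 1" using assms(1) by simp
  show ?thesis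
  proof (cases "M$$(2,2) \<noteq> 1 \<or> N$$(2,2) \<noteq> 1")
    case True
    then show ?thesis using mm(3,4) nn(3,4) mn(3,4) nm(3,4) by (intro redA[OF n1]) auto
  next
    case F1: False
    show ?thesis
    proof (cases "M$$(0,0) \<noteq> 1 \<or> N$$(0,0) \<noteq> 1")
      case True
      then show ?thesis using mm(1,2) nn(1,2) mn(1,2) nm(1,2) by (intro redC[OF n1]) auto
    next
      case F2: False
      have m20: "M$$(2,0) = 0" "N$$(2,0) = 0" using mm(7) nn(7) by auto
      show ?thesis
      proof (cases "M$$(1,0) = 0 \<and> N$$(1,0) = 0")
        case True
        then show ?thesis using m20 by (intro redA[OF n1]) auto
      next
        case False
        then have "M$$(2,1) = 0" "N$$(2,1) = 0" using mm(6) nn(6) mn(6) nm(6) by auto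
        then show ?thesis using m20 by (intro redD[OF n1]) auto
      qed
    qed
  qed
qed
end
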